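(* Let $N\ge2$ and let $a_1,\dots,a_m$ be transpositions in $S_N$ each of the form $(\alpha,N)$ with $1\le\alpha\le N-1$. Suppose that for some $k$ we have $a_k\ne a_i$ for all $i\ne k$. Let $\sigma_1=a_1\cdots a_{k-1}$ and $\sigma_2=a_{k+1}\cdots a_m$. Then $|\sigma_1a_k\sigma_2|=|\sigma_1\sigma_2|+1$.
   Context: For a permutation $\sigma$, its length $|\sigma|$ is the minimal number of transpositions whose product is $\sigma$ (equivalently, $N$ minus the number of cycles of $\sigma$, fixed points included). Empty products are the identity. *)

theory Defs
  imports "HOL-Combinatorics.Combinatorics"
begin

text \<open>Permutations of {1..N} are functions nat => nat (fixing everything outside {1..N}).
  The cycle of x under sigma is its orbit; fixed points give singleton cycles.\<close>

definition cyc_of :: "(nat \<Rightarrow> nat) \<Rightarrow> nat \<Rightarrow> nat set" where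
  "cyc_of \<sigma> x = {(\<sigma> ^^ n) x | n. True}"

definition num_cycles :: "nat \<Rightarrow> (nat \<Rightarrow> nat) \<Rightarrow> nat" where
  "num_cycles N \<sigma> = card (cyc_of \<sigma> ` {1..N})"

definition perm_len :: "nat \<Rightarrow> (nat \<Rightarrow> nat) \<Rightarrow> nat" where
  "perm_len N \<sigma> = N - num_cycles N \<sigma>"

definition perm_prod :: "(nat \<Rightarrow> nat) list \<Rightarrow> nat \<Rightarrow> nat" where
  "perm_prod as = foldr (\<circ>) as id"

end

theory Submission
  imports Defs
begin

lemma orbit_same:
  assumes "permutation f" "y \<in> orbit f x"
  shows "orbit f y = orbit f x"
proof
  show "orbit f y \<subseteq> orbit f x" using assms orbit_trans by fast
  have "x \<in> orbit f x" by (rule permutation_self_in_orbit[OF assms(1)])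
  then have "x \<in> orbit f y" using assms(2) orbit_swap by fast
  then show "orbit f x \<subseteq> orbit f y" using orbit_trans by fast
qed

lemma cyc_of_orbit:
  assumes "permutation f" shows "cyc_of f x = orbit f x"
  unfolding cyc_of_def using orbit_altdef_permutation[OF assms] by simp

lemma merge_card:
  assumes S: "S = {1..(N::nat)}" and rho: "\<rho> permutes S" and aS: "\<alpha> \<in> S" and rfx: "\<rho> \<alpha> = \<alpha>"
    and cS: "c \<in> S" and ca: "c \<noteq> \<alpha>"
  shows "card (orbit \<rho> ` S) = card (orbit (transpose \<alpha> c \<circ> \<rho>) ` S) + 1"
proof -
  define g where "g = transpose \<alpha> c \<circ> \<rho>"
  have finS: "finite S" using S by simp
  have gp: "g permutes S" unfolding g_def by (intro permutes_compose rho permutes_swap_id aS cS)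
  have permg: "permutation g" using gp finS permutation_permutes by blast
  have permr: "permutation \<rho>" using rho finS permutation_permutes by blast
  define C where "C = orbit \<rho> c"
  have cC: "c \<in> C" unfolding C_def by (rule permutation_self_in_orbit[OF permr])
  have oa: "orbit \<rho> \<alpha> = {\<alpha>}" using rfx orbit_eq_singleton_iff by metis
  have aC: "\<alpha> \<notin> C"
  proof
    assume "\<alpha> \<in> C"
    then have "orbit \<rho> \<alpha> = C" unfolding C_def using orbit_same[OF permr] by blast
    then show False using oa cC ca by auto
  qed
  have CS: "C \<subseteq> S" unfolding C_def using permutes_orbit_subset[OF rho cS] .
  have rC: "\<rho> y \<in> C" if "y \<in> C" for y using that unfolding C_def by (rule orbit.step)
  have sub1: "orbit g \<alpha> \<subseteq> C \<union> {\<alpha>}"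
  proof
    fix y assume "y \<in> orbit g \<alpha>"
    then show "y \<in> C \<union> {\<alpha>}"
    proof induct
      case base then show ?case using rfx cC by (simp add: g_def)
    next
      case (step y)
      show ?case
      proof (cases "y \<in> C")
        case True
        then have "\<rho> y \<in> C" by (rule rC)
        then show ?thesis using cC by (auto simp: g_def transpose_def)
      next
        case False
        then have "y = \<alpha>" using step.hyps(2) by auto
        then show ?thesis using rfx cC by (simp add: g_def)
      qed
    qed
  qed
  have ga: "g \<alpha> = c" using rfx by (simp add: g_def)
  have pw: "(\<rho> ^^ n) c \<in> orbit g \<alpha>" for n
  proof (induct n)
    case 0 then show ?case using ga orbit.base[of g \<alpha>] by simp
  next
    case (Suc n)
    let ?z = "(\<rho> ^^ n) c"
    have zC: "?z \<in> C" unfolding C_def using funpow_in_orbit[of c \<rho> c n] permutation_self_in_orbit[OF permr] by blast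
    show ?case
    proof (cases "\<rho> ?z = c")
      case True then show ?thesis using ga orbit.base[of g \<alpha>] by simp
    next
      case False
      have "\<rho> ?z \<noteq> \<alpha>" using rC[OF zC] aC by auto
      then have "g ?z = \<rho> ?z" using False by (simp add: g_def)
      then show ?thesis using orbit.step[OF Suc] by simp
    qed
  qed
  have sub2: "C \<subseteq> orbit g \<alpha>"
    unfolding C_def using pw orbit_altdef_permutation[OF permr, of c] by auto
  have oga: "orbit g \<alpha> = C \<union> {\<alpha>}"
    using sub1 sub2 permutation_self_in_orbit[OF permg, of \<alpha>] by auto
  have other: "orbit g x = orbit \<rho> x" if xS: "x \<in> S" and xn: "x \<notin> C \<union> {\<alpha>}" for x
  proof (rule orbit_cong)
    show "x \<in> orbit \<rho> x" by (rule permutation_self_in_orbit[OF permr])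
    fix s assume s: "s \<in> orbit \<rho> x"
    have rs: "\<rho> s \<in> orbit \<rho> x" using s by (rule orbit.step)
    have "\<rho> s \<noteq> \<alpha>"
    proof
      assume "\<rho> s = \<alpha>"
      then have "orbit \<rho> \<alpha> = orbit \<rho> x" using rs orbit_same[OF permr] by metis
      then show False using oa xn permutation_self_in_orbit[OF permr, of x] by auto
    qed
    moreover have "\<rho> s \<noteq> c"
    proof
      assume "\<rho> s = c"
      then have "C = orbit \<rho> x" unfolding C_def using rs orbit_same[OF permr] by metis
      then show False using xn permutation_self_in_orbit[OF permr, of x] by auto
    qed
    ultimately show "g s = \<rho> s" by (simp add: g_def)
  qed
  define R where "R = orbit \<rho> ` (S - (C \<union> {\<alpha>}))"
  have finR: "finite R" unfolding R_def using finS by simp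
  have gimg: "orbit g ` S = insert (C \<union> {\<alpha>}) R"
  proof -
    have "orbit g ` S = orbit g ` (S \<inter> (C \<union> {\<alpha>})) \<union> orbit g ` (S - (C \<union> {\<alpha>}))" by auto
    also have "orbit g ` (S \<inter> (C \<union> {\<alpha>})) = {C \<union> {\<alpha>}}"
    proof -
      have "orbit g x = C \<union> {\<alpha>}" if "x \<in> C \<union> {\<alpha>}" for x
        using that oga orbit_same[OF permg, of x \<alpha>] by auto
      moreover have "S \<inter> (C \<union> {\<alpha>}) \<noteq> {}" using aS by auto
      ultimately show ?thesis by blast
    qed
    also have "orbit g ` (S - (C \<union> {\<alpha>})) = R" unfolding R_def using other by auto
    finally show ?thesis by simp
  qed
  have rimg: "orbit \<rho> ` S = insert C (insert {\<alpha>} R)"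
  proof -
    have "orbit \<rho> ` S = orbit \<rho> ` (S \<inter> C) \<union> orbit \<rho> ` {\<alpha>} \<union> orbit \<rho> ` (S - (C \<union> {\<alpha>}))"
      using aS by auto
    also have "orbit \<rho> ` (S \<inter> C) = {C}"
    proof -
      have "orbit \<rho> x = C" if "x \<in> C" for x
        using that orbit_same[OF permr] unfolding C_def by blast
      moreover have "S \<inter> C \<noteq> {}" using cC cS by auto
      ultimately show ?thesis by blast
    qed
    finally show ?thesis using oa R_def by auto
  qed
  have notR: "X \<notin> R" if "X = C \<or> X = {\<alpha>} \<or> X = C \<union> {\<alpha>}" for X
  proof
    assume "X \<in> R"
    then obtain x where x: "x \<in> S" "x \<notin> C \<union> {\<alpha>}" "X = orbit \<rho> x" unfolding R_def by auto
    then have "x \<in> X" using permutation_self_in_orbit[OF permr, of x] by auto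
    then show False using that x by auto
  qed
  have Cne: "C \<noteq> {\<alpha>}" using aC by auto
  show ?thesis unfolding g_def[symmetric] gimg rimg using notR Cne finR by simp
qed

lemma prod_fix:
  assumes "\<forall>b\<in>set bs. 1 \<le> b \<and> b \<le> N - 1 \<and> b \<noteq> \<alpha>" "N \<ge> 2" "\<alpha> \<noteq> N"
  shows "perm_prod (map (\<lambda>b. transpose b N) bs) permutes {1..N}
       \<and> perm_prod (map (\<lambda>b. transpose b N) bs) \<alpha> = \<alpha>"
  using assms
proof (induct bs)
  case Nil then show ?case using permutes_id[of "{1..N}"] by (simp add: perm_prod_def id_def)
next
  case (Cons b bs)
  have IH: "perm_prod (map (\<lambda>b. transpose b N) bs) permutes {1..N}
       \<and> perm_prod (map (\<lambda>b. transpose b N) bs) \<alpha> = \<alpha>" using Cons by auto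
  have eq: "perm_prod (map (\<lambda>b. transpose b N) (b # bs)) = transpose b N \<circ> perm_prod (map (\<lambda>b. transpose b N) bs)"
    by (simp add: perm_prod_def)
  have bp: "transpose b N permutes {1..N}" using Cons.prems by (intro permutes_swap_id) auto
  show ?case unfolding eq
  proof
    show "transpose b N \<circ> perm_prod (map (\<lambda>b. transpose b N) bs) permutes {1..N}"
      using IH bp permutes_compose by blast
    show "(transpose b N \<circ> perm_prod (map (\<lambda>b. transpose b N) bs)) \<alpha> = \<alpha>"
      using IH Cons.prems by simp
  qed
qed

lemma conj_transpose:
  assumes "inj s" shows "s \<circ> transpose a b = transpose (s a) (s b) \<circ> s"
proof (rule ext)
  fix x
  have i: "s x = s y \<longleftrightarrow> x = y" for y using assms by (simp add: inj_eq)
  show "(s \<circ> transpose a b) x = (transpose (s a) (s b) \<circ> s) x"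
    by (cases "x = a"; cases "x = b") (simp_all add: transpose_def i)
qed

theorem lemma3:
  fixes N k :: nat and as :: "nat list"
  assumes "N \<ge> 2"
    and "\<forall>\<alpha>\<in>set as. 1 \<le> \<alpha> \<and> \<alpha> \<le> N - 1"
    and "k < length as"
    and "\<forall>i<length as. i \<noteq> k \<longrightarrow> transpose (as ! k) N \<noteq> transpose (as ! i) N"
  shows "perm_len N (perm_prod (map (\<lambda>\<alpha>. transpose \<alpha> N) (take k as))
                      \<circ> transpose (as ! k) N
                      \<circ> perm_prod (map (\<lambda>\<alpha>. transpose \<alpha> N) (drop (Suc k) as)))
       = perm_len N (perm_prod (map (\<lambda>\<alpha>. transpose \<alpha> N) (take k as))
                      \<circ> perm_prod (map (\<lambda>\<alpha>. transpose \<alpha> N) (drop (Suc k) as))) + 1"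
proof -
  define a where "a = as ! k"
  define s1 where "s1 = perm_prod (map (\<lambda>\<alpha>. transpose \<alpha> N) (take k as))"
  define s2 where "s2 = perm_prod (map (\<lambda>\<alpha>. transpose \<alpha> N) (drop (Suc k) as))"
  define S where "S = {1..N}"
  have aset: "a \<in> set as" unfolding a_def using assms(3) by simp
  have a1: "1 \<le> a" "a \<le> N - 1" using aset assms(2) by auto
  have aN: "a \<noteq> N" using a1 assms(1) by auto
  have neq: "as ! i \<noteq> a" if "i < length as" "i \<noteq> k" for i
  proof
    assume e: "as ! i = a"
    have "transpose (as ! k) N \<noteq> transpose (as ! i) N" using assms(4) that by blast
    then show False using e unfolding a_def by simp
  qed
  have t: "\<forall>b\<in>set (take k as). 1 \<le> b \<and> b \<le> N - 1 \<and> b \<noteq> a"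
  proof
    fix b assume "b \<in> set (take k as)"
    then obtain i where i: "i < length (take k as)" "b = take k as ! i" by (auto simp: in_set_conv_nth)
    then have bi: "b = as ! i" "i < k" "i < length as" by auto
    then have "b \<in> set as" by simp
    moreover have "b \<noteq> a" using neq[of i] bi by simp
    ultimately show "1 \<le> b \<and> b \<le> N - 1 \<and> b \<noteq> a" using assms(2) by blast
  qed
  have d: "\<forall>b\<in>set (drop (Suc k) as). 1 \<le> b \<and> b \<le> N - 1 \<and> b \<noteq> a"
  proof
    fix b assume "b \<in> set (drop (Suc k) as)"
    then obtain i where i: "i < length (drop (Suc k) as)" "b = drop (Suc k) as ! i" by (auto simp: in_set_conv_nth)
    then have bi: "b = as ! (Suc k + i)" "Suc k + i < length as" by auto
    then have "b \<in> set as" by simp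
    moreover have "b \<noteq> a" using neq[of "Suc k + i"] bi by simp
    ultimately show "1 \<le> b \<and> b \<le> N - 1 \<and> b \<noteq> a" using assms(2) by blast
  qed
  have P1: "s1 permutes S" "s1 a = a" using prod_fix[OF t assms(1) aN] unfolding s1_def S_def by auto
  have P2: "s2 permutes S" "s2 a = a" using prod_fix[OF d assms(1) aN] unfolding s2_def S_def by auto
  define \<rho> where "\<rho> = s1 \<circ> s2"
  have rho: "\<rho> permutes S" unfolding \<rho>_def by (rule permutes_compose[OF P2(1) P1(1)])
  have rfix: "\<rho> a = a" unfolding \<rho>_def using P1 P2 by simp
  have aS: "a \<in> S" "N \<in> S" using a1 assms(1) by (auto simp: S_def)
  have injs1: "inj s1" using P1 permutes_inj by blast
  have cS: "s1 N \<in> S" using permutes_in_image[OF P1(1)] aS(2) by simp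
  have cne: "s1 N \<noteq> a" using injs1 P1(2) aN by (metis inj_eq)
  have geq: "s1 \<circ> transpose a N \<circ> s2 = transpose a (s1 N) \<circ> \<rho>"
    unfolding \<rho>_def using conj_transpose[OF injs1, of a N] P1(2) by (simp add: comp_assoc)
  have finS: "finite S" by (simp add: S_def)
  have pr: "permutation \<rho>" using rho finS permutation_permutes by blast
  have pg: "permutation (transpose a (s1 N) \<circ> \<rho>)"
  proof -
    have "transpose a (s1 N) \<circ> \<rho> permutes S" by (intro permutes_compose rho permutes_swap_id aS cS)
    then show ?thesis using finS permutation_permutes by blast
  qed
  have mc: "card (orbit \<rho> ` S) = card (orbit (transpose a (s1 N) \<circ> \<rho>) ` S) + 1"
    by (rule merge_card[OF S_def rho aS(1) rfix cS cne])
  have le: "card (orbit \<rho> ` S) \<le> N" using card_image_le[OF finS, of "orbit \<rho>"] by (simp add: S_def)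
  have n1: "num_cycles N \<rho> = card (orbit \<rho> ` S)"
    unfolding num_cycles_def S_def using cyc_of_orbit[OF pr] by simp
  have n2: "num_cycles N (transpose a (s1 N) \<circ> \<rho>) = card (orbit (transpose a (s1 N) \<circ> \<rho>) ` S)"
    unfolding num_cycles_def S_def using cyc_of_orbit[OF pg] by simp
  have "perm_len N (transpose a (s1 N) \<circ> \<rho>) = perm_len N \<rho> + 1"
    unfolding perm_len_def n1 n2 using mc le by linarith
  then have "perm_len N (s1 \<circ> transpose a N \<circ> s2) = perm_len N (s1 \<circ> s2) + 1"
    unfolding geq \<rho>_def .
  then show ?thesis unfolding a_def s1_def s2_def .
qed

end
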